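(* Let $L$ be a finite geometric lattice, fix a total order on its set of atoms $A(L)$, and let $\lambda$ be the minimum labeling: for a cover $x\lessdot y$, $\lambda(x\lessdot y)$ is the smallest atom $a$ (in the fixed order) with $x\vee a=y$. Then $\lambda$ is an EW-labeling of $L$.
   Context: An E-labeling is a map $\lambda$ from the cover relations of $L$ to a poset $\Lambda$ (here the totally ordered set $A(L)$). Words of labels of saturated chains are read bottom to top; a chain is increasing if its word is strictly increasing and ascent-free if no two consecutive labels $a,b$ satisfy $a<b$. An ER-labeling is an E-labeling such that every closed interval has exactly one increasing maximal chain. Rank two switching property: for every saturated chain $\hat0=x_0\lessdot\cdots\lessdot x_k$ and every $i$ with $\lambda(x_{i-1}\lessdot x_i)<\lambda(x_i\lessdot x_{i+1})$ there is a unique $x_i'$ with $x_{i-1}\lessdot x_i'\lessdot x_{i+1}$, $\lambda(x_{i-1}\lessdot x_i')=\lambda(x_i\lessdot x_{i+1})$ and $\lambda(x_i'\lessdot x_{i+1})=\lambda(x_{i-1}\lessdot x_i)$. An EW-labeling is an ER-labeling with the rank two switching property such that in each interval distinct maximal chains have distinct words of labels. *)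

theory Defs
  imports Main
begin

definition cover :: "'a::order \<Rightarrow> 'a \<Rightarrow> bool" where
  "cover x y \<longleftrightarrow> x < y \<and> \<not> (\<exists>z. x < z \<and> z < y)"

definition atom :: "'a::bounded_lattice \<Rightarrow> bool" where
  "atom a \<longleftrightarrow> cover bot a"

text \<open>A finite geometric lattice: a finite lattice (hence bounded) which is
  (written with cover/atom unfolded, since class axioms cannot use them)
  atomistic (every non-bottom element is the join of the atoms below it) and
  (upper) semimodular.\<close>
class geometric_lattice = finite + bounded_lattice +
  assumes atomistic:
    "x \<noteq> bot \<Longrightarrow> x = Sup_fin {a. (bot < a \<and> \<not> (\<exists>z. bot < z \<and> z < a)) \<and> a \<le> x}"
  assumes semimodular:
    "inf x y < x \<and> \<not> (\<exists>z. inf x y < z \<and> z < x) \<Longrightarrow>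
     y < sup x y \<and> \<not> (\<exists>z. y < z \<and> z < sup x y)"

text \<open>R is the (reflexive) total order on the atoms; the label of a cover x \<lessdot> y is
  the R-smallest atom a with x \<squnion> a = y.\<close>
definition min_label :: "('a::bounded_lattice \<times> 'a) set \<Rightarrow> 'a \<Rightarrow> 'a \<Rightarrow> 'a" where
  "min_label R x y = (THE a. atom a \<and> sup x a = y \<and>
      (\<forall>b. atom b \<and> sup x b = y \<longrightarrow> (a, b) \<in> R))"

definition sat_chain :: "'a::order \<Rightarrow> 'a \<Rightarrow> 'a list \<Rightarrow> bool" where
  "sat_chain x y c \<longleftrightarrow> c \<noteq> [] \<and> hd c = x \<and> last c = y \<and>
     (\<forall>i. i + 1 < length c \<longrightarrow> cover (c ! i) (c ! (i + 1)))"

definition label_word :: "('a \<Rightarrow> 'a \<Rightarrow> 'l) \<Rightarrow> 'a list \<Rightarrow> 'l list" where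
  "label_word lam c = map (\<lambda>i. lam (c ! i) (c ! (i + 1))) [0..<length c - 1]"

text \<open>lt is the strict order on the label poset.\<close>
definition increasing :: "('l \<Rightarrow> 'l \<Rightarrow> bool) \<Rightarrow> 'l list \<Rightarrow> bool" where
  "increasing lt w \<longleftrightarrow> (\<forall>i. i + 1 < length w \<longrightarrow> lt (w ! i) (w ! (i + 1)))"

definition ER_labeling :: "('l \<Rightarrow> 'l \<Rightarrow> bool) \<Rightarrow> ('a::order \<Rightarrow> 'a \<Rightarrow> 'l) \<Rightarrow> bool" where
  "ER_labeling lt lam \<longleftrightarrow>
     (\<forall>x y. x \<le> y \<longrightarrow> (\<exists>!c. sat_chain x y c \<and> increasing lt (label_word lam c)))"

definition rank_two_switching ::
  "('l \<Rightarrow> 'l \<Rightarrow> bool) \<Rightarrow> ('a::bounded_lattice \<Rightarrow> 'a \<Rightarrow> 'l) \<Rightarrow> bool" where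
  "rank_two_switching lt lam \<longleftrightarrow>
     (\<forall>c y i. sat_chain bot y c \<longrightarrow> 0 < i \<longrightarrow> i + 1 < length c \<longrightarrow>
        lt (lam (c ! (i - 1)) (c ! i)) (lam (c ! i) (c ! (i + 1))) \<longrightarrow>
        (\<exists>!x'. cover (c ! (i - 1)) x' \<and> cover x' (c ! (i + 1)) \<and>
               lam (c ! (i - 1)) x' = lam (c ! i) (c ! (i + 1)) \<and>
               lam x' (c ! (i + 1)) = lam (c ! (i - 1)) (c ! i)))"

definition distinct_words :: "('a::order \<Rightarrow> 'a \<Rightarrow> 'l) \<Rightarrow> bool" where
  "distinct_words lam \<longleftrightarrow>
     (\<forall>x y c1 c2. sat_chain x y c1 \<longrightarrow> sat_chain x y c2 \<longrightarrow>
        label_word lam c1 = label_word lam c2 \<longrightarrow> c1 = c2)"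

definition EW_labeling ::
  "('l \<Rightarrow> 'l \<Rightarrow> bool) \<Rightarrow> ('a::bounded_lattice \<Rightarrow> 'a \<Rightarrow> 'l) \<Rightarrow> bool" where
  "EW_labeling lt lam \<longleftrightarrow> ER_labeling lt lam \<and> rank_two_switching lt lam \<and> distinct_words lam"

end

theory Submission
  imports Defs
begin
lemma atom_def': "atom a \<longleftrightarrow> bot < a \<and> \<not> (\<exists>z. bot < z \<and> z < a)"
  by (simp add: atom_def cover_def)

lemma exists_atom_below:
  fixes y :: "'a::geometric_lattice"
  assumes "y \<noteq> bot" shows "\<exists>a. atom a \<and> a \<le> y"
proof -
  have f: "finite {z. bot < z \<and> z \<le> y}" by simp
  have "y \<in> {z. bot < z \<and> z \<le> y}" using assms by (simp add: bot.not_eq_extremum)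
  then have "{z. bot < z \<and> z \<le> y} \<noteq> {}" by blast
  from finite_has_minimal[OF f this] obtain m where m: "m \<in> {z. bot < z \<and> z \<le> y}"
    "\<And>z. z\<in>{z. bot < z \<and> z \<le> y} \<Longrightarrow> z \<le> m \<Longrightarrow> m = z"
    by blast
  have "atom m" unfolding atom_def'
  proof (intro conjI notI)
    show "bot < m" using m(1) by simp
    assume "\<exists>z. bot < z \<and> z < m"
    then obtain z where z: "bot < z" "z < m" by blast
    then have zin: "z \<in> {z. bot < z \<and> z \<le> y}" using m(1) by (metis (mono_tags) mem_Collect_eq less_le_trans less_imp_le)
    show False using m(2)[OF zin less_imp_le[OF z(2)]] z(2) by simp
  qed
  then show ?thesis using m by blast
qed

lemma below_atoms:
  fixes x y :: "'a::geometric_lattice"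
  assumes "\<And>a. atom a \<Longrightarrow> a \<le> y \<Longrightarrow> a \<le> x" shows "y \<le> x"
proof (cases "y = bot")
  case True then show ?thesis by simp
next
  case False
  let ?A = "{a. (bot < a \<and> \<not> (\<exists>z. bot < z \<and> z < a)) \<and> a \<le> y}"
  have y: "y = Sup_fin ?A" using atomistic[OF False] .
  have ne: "?A \<noteq> {}" using exists_atom_below[OF False] unfolding atom_def' by blast
  have fin: "finite ?A" by simp
  have "Sup_fin ?A \<le> x"
  proof (rule Sup_fin.boundedI[OF fin ne])
    fix a assume "a \<in> ?A"
    then have "atom a" "a \<le> y" unfolding atom_def' by simp_all
    then show "a \<le> x" by (rule assms)
  qed
  then show ?thesis using y by simp
qed

lemma cover_sup_atom:
  fixes x a :: "'a::geometric_lattice"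
  assumes "atom a" "\<not> a \<le> x" shows "cover x (sup x a)"
proof -
  have "inf a x \<noteq> a" using assms(2) by (metis inf.absorb_iff1)
  then have "inf a x < a" by (simp add: order_less_le)
  then have "inf a x = bot" using assms(1) unfolding atom_def' using bot.not_eq_extremum by metis
  then have "inf a x < a \<and> \<not> (\<exists>z. inf a x < z \<and> z < a)" using assms(1) unfolding atom_def' by simp
  from semimodular[OF this] show ?thesis unfolding cover_def by (simp add: sup_commute)
qed

lemma cover_atom_exists:
  fixes x y :: "'a::geometric_lattice"
  assumes "cover x y" shows "\<exists>a. atom a \<and> sup x a = y"
proof -
  have "\<not> y \<le> x" using assms unfolding cover_def by auto
  then obtain a where a: "atom a" "a \<le> y" "\<not> a \<le> x" using below_atoms by metis
  have "x < sup x a" using a(3) by (metis sup.cobounded2 sup_ge1 order_less_le)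
  moreover have "sup x a \<le> y" using a(2) assms unfolding cover_def by (simp add: less_imp_le)
  ultimately have "sup x a = y" using assms unfolding cover_def using order_le_less by metis
  then show ?thesis using a by blast
qed


lemma sat_chain_Nil[simp]: "\<not> sat_chain x y []"
  by (simp add: sat_chain_def)

lemma sat_chain_single[simp]: "sat_chain x y [u] \<longleftrightarrow> u = x \<and> x = y"
  by (auto simp: sat_chain_def)

lemma idx_Cons2:
  "(\<forall>i. i + 1 < length (u # v # r) \<longrightarrow> P ((u # v # r) ! i) ((u # v # r) ! (i + 1))) \<longleftrightarrow>
   P u v \<and> (\<forall>i. i + 1 < length (v # r) \<longrightarrow> P ((v # r) ! i) ((v # r) ! (i + 1)))"
proof
  assume h: "\<forall>i. i + 1 < length (u # v # r) \<longrightarrow> P ((u # v # r) ! i) ((u # v # r) ! (i + 1))"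
  have "P u v" using h[rule_format, of 0] by simp
  moreover have "\<forall>i. i + 1 < length (v # r) \<longrightarrow> P ((v # r) ! i) ((v # r) ! (i + 1))"
  proof (intro allI impI)
    fix i assume "i + 1 < length (v # r)"
    then show "P ((v # r) ! i) ((v # r) ! (i + 1))" using h[rule_format, of "Suc i"] by simp
  qed
  ultimately show "P u v \<and> (\<forall>i. i + 1 < length (v # r) \<longrightarrow> P ((v # r) ! i) ((v # r) ! (i + 1)))" ..
next
  assume h: "P u v \<and> (\<forall>i. i + 1 < length (v # r) \<longrightarrow> P ((v # r) ! i) ((v # r) ! (i + 1)))"
  show "\<forall>i. i + 1 < length (u # v # r) \<longrightarrow> P ((u # v # r) ! i) ((u # v # r) ! (i + 1))"
  proof (intro allI impI)
    fix i assume i: "i + 1 < length (u # v # r)"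
    show "P ((u # v # r) ! i) ((u # v # r) ! (i + 1))"
    proof (cases i)
      case 0 then show ?thesis using h by simp
    next
      case (Suc j) then show ?thesis using h i by simp
    qed
  qed
qed

lemma sat_chain_Cons2:
  "sat_chain x y (u # v # r) \<longleftrightarrow> u = x \<and> cover x v \<and> sat_chain v y (v # r)"
  by (simp only: sat_chain_def idx_Cons2) auto

lemma label_word_single[simp]: "label_word lam [u] = []"
  by (simp add: label_word_def)

lemma label_word_Cons2[simp]: "label_word lam (u # v # r) = lam u v # label_word lam (v # r)"
  by (simp add: label_word_def upt_conv_Cons map_Suc_upt[symmetric] del: upt_Suc)

lemma increasing_single[simp]: "increasing lt [a]" and increasing_Nil[simp]: "increasing lt []"
  by (simp_all add: increasing_def)

lemma increasing_Cons2: "increasing lt (a # b # w) \<longleftrightarrow> lt a b \<and> increasing lt (b # w)"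
  by (simp only: increasing_def idx_Cons2)

lemma increasing_ConsD: "increasing lt (a # w) \<Longrightarrow> increasing lt w"
  unfolding increasing_def
proof (intro allI impI)
  fix i assume h: "\<forall>i. i + 1 < length (a # w) \<longrightarrow> lt ((a # w) ! i) ((a # w) ! (i + 1))"
    and i: "i + 1 < length w"
  have "Suc i + 1 < length (a # w)" using i by simp
  then have "lt ((a # w) ! Suc i) ((a # w) ! (Suc i + 1))" using h by blast
  then show "lt (w ! i) (w ! (i + 1))" by simp
qed

lemma sat_chain_cases:
  assumes "sat_chain x y c"
  shows "(c = [x] \<and> x = y) \<or> (\<exists>v r. c = x # v # r \<and> cover x v \<and> sat_chain v y (v # r))"
proof (cases c)
  case Nil then show ?thesis using assms by simp
next
  case (Cons u t)
  then show ?thesis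
  proof (cases t)
    case Nil then show ?thesis using assms Cons by simp
  next
    case (Cons v r) then show ?thesis using assms \<open>c = u # t\<close> by (simp add: sat_chain_Cons2)
  qed
qed

lemma sat_chain_le:
  "sat_chain x y c \<Longrightarrow> x \<le> y \<and> (length c \<ge> 2 \<longrightarrow> x < y)"
proof (induction c arbitrary: x)
  case Nil then show ?case by simp
next
  case (Cons u t)
  show ?case
  proof (cases t)
    case Nil then show ?thesis using Cons by simp
  next
    case (Cons v r)
    then have h: "u = x" "cover x v" "sat_chain v y (v # r)" using Cons.prems by (simp_all add: sat_chain_Cons2)
    have "v \<le> y" using Cons.IH[of v] h(3) \<open>t = v # r\<close> by simp
    moreover have "x < v" using h(2) unfolding cover_def by simp
    ultimately have "x < y" using less_le_trans by blast
    then show ?thesis by (simp add: less_imp_le)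
  qed
qed


context
  fixes R :: "('a::geometric_lattice \<times> 'a) set"
  assumes lo: "linear_order_on {a. atom a} R"
begin

lemma Rrefl: "atom a \<Longrightarrow> (a, a) \<in> R"
  using lo unfolding linear_order_on_def partial_order_on_def preorder_on_def refl_on_def by simp

lemma Rtrans: "(a, b) \<in> R \<Longrightarrow> (b, c) \<in> R \<Longrightarrow> (a, c) \<in> R"
  using lo unfolding linear_order_on_def partial_order_on_def preorder_on_def trans_def by blast

lemma Rantisym: "(a, b) \<in> R \<Longrightarrow> (b, a) \<in> R \<Longrightarrow> a = b"
  using lo unfolding linear_order_on_def partial_order_on_def antisym_def by blast

lemma Rtotal: "atom a \<Longrightarrow> atom b \<Longrightarrow> (a, b) \<in> R \<or> (b, a) \<in> R"
  using lo Rrefl unfolding linear_order_on_def total_on_def by (cases "a = b") auto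

lemma Rmin: "finite S \<Longrightarrow> S \<noteq> {} \<Longrightarrow> S \<subseteq> {a. atom a} \<Longrightarrow> \<exists>m\<in>S. \<forall>b\<in>S. (m, b) \<in> R"
proof (induction S rule: finite_induct)
  case empty then show ?case by simp
next
  case (insert x F)
  show ?case
  proof (cases "F = {}")
    case True then show ?thesis using insert Rrefl by simp
  next
    case False
    then obtain m where m: "m \<in> F" "\<forall>b\<in>F. (m, b) \<in> R" using insert by blast
    have ax: "atom x" "atom m" using insert m by auto
    show ?thesis
    proof (cases "(x, m) \<in> R")
      case True
      then have "\<forall>b\<in>insert x F. (x, b) \<in> R" using m Rtrans Rrefl[OF ax(1)] by blast
      then show ?thesis by blast
    next
      case False
      then have "(m, x) \<in> R" using Rtotal[OF ax] by blast
      then have "\<forall>b\<in>insert x F. (m, b) \<in> R" using m by blast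
      then show ?thesis using m by blast
    qed
  qed
qed

lemma lab_eqI:
  assumes "atom a" "sup x a = y" "\<And>b. atom b \<Longrightarrow> sup x b = y \<Longrightarrow> (a, b) \<in> R"
  shows "min_label R x y = a"
  unfolding min_label_def
proof (rule the_equality)
  show "atom a \<and> sup x a = y \<and> (\<forall>b. atom b \<and> sup x b = y \<longrightarrow> (a, b) \<in> R)" using assms by blast
  fix a' assume "atom a' \<and> sup x a' = y \<and> (\<forall>b. atom b \<and> sup x b = y \<longrightarrow> (a', b) \<in> R)"
  then show "a' = a" using assms Rantisym by blast
qed

lemma lab_props:
  assumes "cover x y"
  shows "atom (min_label R x y)" "sup x (min_label R x y) = y"
    "\<And>b. atom b \<Longrightarrow> sup x b = y \<Longrightarrow> (min_label R x y, b) \<in> R"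
proof -
  let ?S = "{a. atom a \<and> sup x a = y}"
  have "?S \<noteq> {}" using cover_atom_exists[OF assms] by blast
  then obtain m where m: "m \<in> ?S" "\<forall>b\<in>?S. (m, b) \<in> R" using Rmin[of ?S] by auto
  then have eq: "min_label R x y = m" by (intro lab_eqI) auto
  show "atom (min_label R x y)" "sup x (min_label R x y) = y" using m eq by auto
  show "\<And>b. atom b \<Longrightarrow> sup x b = y \<Longrightarrow> (min_label R x y, b) \<in> R" using m eq by auto
qed


lemma lt_sup: "\<not> (c::'b::lattice) \<le> u \<Longrightarrow> u < sup u c"
  by (metis sup.cobounded2 sup_ge1 order_less_le)

lemma cover_top: "cover u w \<Longrightarrow> u < v \<Longrightarrow> v \<le> w \<Longrightarrow> v = w"
  unfolding cover_def using order_le_less by metis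

lemma switch:
  assumes xy: "cover x y" and yz: "cover y z"
    and lt: "(min_label R x y, min_label R y z) \<in> R"
  shows "\<exists>!x'. cover x x' \<and> cover x' z \<and> min_label R x x' = min_label R y z \<and>
            min_label R x' z = min_label R x y"
proof -
  define a where "a = min_label R x y"
  define b where "b = min_label R y z"
  have a: "atom a" "sup x a = y" "\<And>c. atom c \<Longrightarrow> sup x c = y \<Longrightarrow> (a, c) \<in> R"
    using lab_props[OF xy] unfolding a_def by auto
  have b: "atom b" "sup y b = z" "\<And>c. atom c \<Longrightarrow> sup y c = z \<Longrightarrow> (b, c) \<in> R"
    using lab_props[OF yz] unfolding b_def by auto
  have ab: "(a, b) \<in> R" using lt unfolding a_def b_def .
  have xly: "x < y" and ylz: "y < z" using xy yz unfolding cover_def by auto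
  have xley: "x \<le> y" and ylez: "y \<le> z" using xly ylz by (simp_all add: less_imp_le)
  have nby: "\<not> b \<le> y"
  proof
    assume "b \<le> y" then have "sup y b = y" by (simp add: sup_absorb1)
    then show False using b(2) ylz by simp
  qed
  have nbx: "\<not> b \<le> x" using nby xley order_trans by blast
  define x' where "x' = sup x b"
  have c1: "cover x x'" unfolding x'_def by (rule cover_sup_atom[OF b(1) nbx])
  have blez: "b \<le> z" using b(2) by (metis sup_ge2)
  have xlez: "x \<le> z" using xley ylez order_trans by blast
  have x'z: "x' \<le> z" unfolding x'_def using blez xlez by simp
  have x'a: "sup x' a = z"
  proof -
    have "sup x' a = sup (sup x a) b" unfolding x'_def by (simp only: sup.assoc sup.commute[of b a])
    then show ?thesis using a(2) b(2) by simp
  qed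
  have x'ne: "x' \<noteq> z"
  proof
    assume "x' = z"
    then have "cover x z" using c1 by simp
    then have "\<not> (\<exists>w. x < w \<and> w < z)" unfolding cover_def by (rule conjunct2)
    then show False using xly ylz by blast
  qed
  have nax': "\<not> a \<le> x'"
  proof
    assume "a \<le> x'" then have "sup x' a = x'" by (simp add: sup_absorb1)
    then show False using x'a x'ne by simp
  qed
  have c2: "cover x' z" using cover_sup_atom[OF a(1) nax'] x'a by simp
  have x'lz: "x' < z" using c2 unfolding cover_def by simp
  have l1: "min_label R x x' = b"
  proof (rule lab_eqI)
    show "atom b" by (rule b(1))
    show "sup x b = x'" unfolding x'_def ..
    fix c assume c: "atom c" "sup x c = x'"
    have yx: "sup y x = y" using xley by (simp add: sup_absorb1)
    have "sup y c = sup (sup y x) c" using yx by simp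
    also have "\<dots> = sup y (sup x c)" by (rule sup.assoc)
    also have "\<dots> = sup y (sup x b)" using c(2) unfolding x'_def by simp
    also have "\<dots> = sup (sup y x) b" by (rule sup.assoc[symmetric])
    also have "\<dots> = sup y b" using yx by simp
    finally have "sup y c = z" using b(2) by simp
    then show "(b, c) \<in> R" using b(3) c(1) by blast
  qed
  have l2: "min_label R x' z = a"
  proof (rule lab_eqI)
    show "atom a" by (rule a(1))
    show "sup x' a = z" by (rule x'a)
    fix c assume c: "atom c" "sup x' c = z"
    have clez: "c \<le> z" using c(2) by (metis sup_ge2)
    have ncx: "\<not> c \<le> x"
    proof
      assume "c \<le> x" then have "c \<le> x'" unfolding x'_def by (metis le_supI1)
      then have "sup x' c = x'" by (simp add: sup_absorb1)
      then show False using c(2) x'ne by simp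
    qed
    show "(a, c) \<in> R"
    proof (cases "c \<le> y")
      case True
      have "sup x c \<le> y" using True xley by simp
      then have "sup x c = y" using cover_top[OF xy lt_sup[OF ncx]] by simp
      then show ?thesis using a(3) c(1) by blast
    next
      case False
      have "sup y c \<le> z" using clez ylez by simp
      then have "sup y c = z" using cover_top[OF yz lt_sup[OF False]] by simp
      then have "(b, c) \<in> R" using b(3) c(1) by blast
      then show ?thesis using ab Rtrans by blast
    qed
  qed
  show ?thesis
  proof (rule ex1I[of _ x'])
    show "cover x x' \<and> cover x' z \<and> min_label R x x' = min_label R y z \<and> min_label R x' z = min_label R x y"
      using c1 c2 l1 l2 unfolding a_def b_def by simp
    fix x'' assume h: "cover x x'' \<and> cover x'' z \<and> min_label R x x'' = min_label R y z \<and> min_label R x'' z = min_label R x y"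
    then have "sup x (min_label R x x'') = x''" using lab_props(2) by blast
    then show "x'' = x'" using h unfolding x'_def b_def by simp
  qed
qed


abbreviation LT where "LT \<equiv> (\<lambda>a b. (a, b) \<in> R \<and> a \<noteq> b)"

lemma first_label_min:
  "sat_chain x y (x # z # r) \<Longrightarrow> increasing LT (label_word (min_label R) (x # z # r)) \<Longrightarrow>
   atom b \<Longrightarrow> b \<le> y \<Longrightarrow> \<not> b \<le> x \<Longrightarrow> (min_label R x z, b) \<in> R"
proof (induction r arbitrary: x z)
  case Nil
  then have h: "x = x \<and> cover x z \<and> sat_chain z y [z]" by (simp only: sat_chain_Cons2)
  then have xz: "cover x z" by blast
  have "sat_chain z y [z]" using h by blast
  then have zy: "z = y" by (simp only: sat_chain_single)
  have "sup x b \<le> z" using Nil.prems(4) zy xz unfolding cover_def by (simp add: less_imp_le)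
  then have "sup x b = z" using cover_top[OF xz lt_sup[OF Nil.prems(5)]] by simp
  then show ?case using lab_props(3)[OF xz Nil.prems(3)] by simp
next
  case (Cons w r')
  have xz: "cover x z" and ch: "sat_chain z y (z # w # r')" using Cons.prems(1) by (simp_all add: sat_chain_Cons2)
  have inc: "LT (min_label R x z) (min_label R z w)" "increasing LT (label_word (min_label R) (z # w # r'))"
    using Cons.prems(2) by (simp_all add: increasing_Cons2)
  show ?case
  proof (cases "b \<le> z")
    case True
    have "sup x b \<le> z" using True xz unfolding cover_def by (simp add: less_imp_le)
    then have "sup x b = z" using cover_top[OF xz lt_sup[OF Cons.prems(5)]] by simp
    then show ?thesis using lab_props(3)[OF xz Cons.prems(3)] by simp
  next
    case False
    have "(min_label R z w, b) \<in> R" using Cons.IH[OF ch inc(2) Cons.prems(3,4) False] .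
    then show ?thesis using inc(1) Rtrans by blast
  qed
qed


lemma greedy_exists:
  "x \<le> y \<Longrightarrow> \<exists>c. sat_chain x y c \<and> increasing LT (label_word (min_label R) c)"
proof (induction "card {a. atom a \<and> a \<le> y \<and> \<not> a \<le> x}" arbitrary: x rule: less_induct)
  case less
  let ?S = "{a. atom a \<and> a \<le> y \<and> \<not> a \<le> x}"
  show ?case
  proof (cases "?S = {}")
    case True
    then have "y \<le> x" using below_atoms by blast
    then have "x = y" using less.prems by simp
    then have "sat_chain x y [x] \<and> increasing LT (label_word (min_label R) [x])" by simp
    then show ?thesis by blast
  next
    case False
    obtain m where m: "m \<in> ?S" "\<forall>b\<in>?S. (m, b) \<in> R" using Rmin[of ?S] False by auto
    have am: "atom m" "m \<le> y" "\<not> m \<le> x" using m(1) by simp_all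
    define z where "z = sup x m"
    have xz: "cover x z" unfolding z_def by (rule cover_sup_atom[OF am(1) am(3)])
    have zy: "z \<le> y" unfolding z_def using less.prems am(2) by simp
    have xlez: "x \<le> z" unfolding z_def by simp
    have sub: "{a. atom a \<and> a \<le> y \<and> \<not> a \<le> z} \<subset> ?S"
    proof
      show "{a. atom a \<and> a \<le> y \<and> \<not> a \<le> z} \<subseteq> ?S" using xlez order_trans by blast
      have "m \<le> z" unfolding z_def by simp
      then show "{a. atom a \<and> a \<le> y \<and> \<not> a \<le> z} \<noteq> ?S" using m(1) by blast
    qed
    have "card {a. atom a \<and> a \<le> y \<and> \<not> a \<le> z} < card ?S"
      by (rule psubset_card_mono[OF _ sub]) simp
    from less.hyps[OF this zy] obtain c' where
      c': "sat_chain z y c'" "increasing LT (label_word (min_label R) c')" by blast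
    have labxz: "(min_label R x z, m) \<in> R"
      using lab_props(3)[OF xz am(1)] unfolding z_def by simp
    have labz: "min_label R x z \<le> z" using lab_props(2)[OF xz] by (metis sup_ge2)
    from sat_chain_cases[OF c'(1)] show ?thesis
    proof
      assume h: "c' = [z] \<and> z = y"
      then have "sat_chain x y [x, z]" using xz by (simp add: sat_chain_Cons2)
      moreover have "increasing LT (label_word (min_label R) [x, z])" by (simp add: increasing_Cons2)
      ultimately show ?thesis by blast
    next
      assume "\<exists>v r. c' = z # v # r \<and> cover z v \<and> sat_chain v y (v # r)"
      then obtain w r where h: "c' = z # w # r" "cover z w" "sat_chain w y (w # r)" by blast
      have wy: "w \<le> y" using sat_chain_le[OF h(3)] by simp
      define l where "l = min_label R z w"
      have l: "atom l" "sup z l = w" using lab_props[OF h(2)] unfolding l_def by simp_all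
      have lw: "l \<le> w" using l(2) by (metis sup_ge2)
      have nlz: "\<not> l \<le> z"
      proof
        assume "l \<le> z" then have "sup z l = z" by (simp add: sup_absorb1)
        then show False using l(2) h(2) unfolding cover_def by simp
      qed
      have nlx: "\<not> l \<le> x" using nlz xlez order_trans by blast
      have "l \<in> ?S" using l(1) lw wy nlx order_trans by blast
      then have "(m, l) \<in> R" using m(2) by blast
      then have R1: "(min_label R x z, l) \<in> R" using labxz Rtrans by blast
      have ne: "min_label R x z \<noteq> l" using labz nlz by blast
      have "sat_chain x y (x # c')" using xz c'(1) h(1) by (simp add: sat_chain_Cons2)
      moreover have "increasing LT (label_word (min_label R) (x # c'))"
        using c'(2) h(1) R1 ne unfolding l_def by (simp add: increasing_Cons2)
      ultimately show ?thesis by blast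
    qed
  qed
qed

lemma chain_unique:
  "sat_chain x y c1 \<Longrightarrow> increasing LT (label_word (min_label R) c1) \<Longrightarrow>
   sat_chain x y c2 \<Longrightarrow> increasing LT (label_word (min_label R) c2) \<Longrightarrow> c1 = c2"
proof (induction c1 arbitrary: x c2)
  case Nil then show ?case by simp
next
  case (Cons u t)
  from sat_chain_cases[OF Cons.prems(1)] show ?case
  proof
    assume h1: "u # t = [x] \<and> x = y"
    from sat_chain_cases[OF Cons.prems(3)] show ?thesis
    proof
      assume "c2 = [x] \<and> x = y" then show ?thesis using h1 by simp
    next
      assume "\<exists>v r. c2 = x # v # r \<and> cover x v \<and> sat_chain v y (v # r)"
      then obtain v r where "c2 = x # v # r" by blast
      then have "x < y" using sat_chain_le[OF Cons.prems(3)] by simp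
      then show ?thesis using h1 by simp
    qed
  next
    assume "\<exists>v r. u # t = x # v # r \<and> cover x v \<and> sat_chain v y (v # r)"
    then obtain v r where h1: "u # t = x # v # r" "cover x v" "sat_chain v y (v # r)" by blast
    have xy: "x < y" using sat_chain_le[OF Cons.prems(1)] h1(1) by simp
    from sat_chain_cases[OF Cons.prems(3)] show ?thesis
    proof
      assume "c2 = [x] \<and> x = y" then show ?thesis using xy by simp
    next
      assume "\<exists>v r. c2 = x # v # r \<and> cover x v \<and> sat_chain v y (v # r)"
      then obtain v' r' where h2: "c2 = x # v' # r'" "cover x v'" "sat_chain v' y (v' # r')" by blast
      have vy: "v \<le> y" using sat_chain_le[OF h1(3)] by simp
      have v'y: "v' \<le> y" using sat_chain_le[OF h2(3)] by simp
      define a where "a = min_label R x v"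
      define a' where "a' = min_label R x v'"
      have a: "atom a" "sup x a = v" using lab_props[OF h1(2)] unfolding a_def by simp_all
      have a': "atom a'" "sup x a' = v'" using lab_props[OF h2(2)] unfolding a'_def by simp_all
      have ay: "a \<le> y" using a(2) vy by (metis sup_ge2 order_trans)
      have a'y: "a' \<le> y" using a'(2) v'y by (metis sup_ge2 order_trans)
      have nax: "\<not> a \<le> x"
      proof
        assume "a \<le> x" then have "sup x a = x" by (simp add: sup_absorb1)
        then show False using a(2) h1(2) unfolding cover_def by simp
      qed
      have na'x: "\<not> a' \<le> x"
      proof
        assume "a' \<le> x" then have "sup x a' = x" by (simp add: sup_absorb1)
        then show False using a'(2) h2(2) unfolding cover_def by simp
      qed
      have c1: "sat_chain x y (x # v # r)" using Cons.prems(1) h1(1) by simp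
      have i1: "increasing LT (label_word (min_label R) (x # v # r))" using Cons.prems(2) h1(1) by simp
      have c2: "sat_chain x y (x # v' # r')" using Cons.prems(3) h2(1) by simp
      have i2: "increasing LT (label_word (min_label R) (x # v' # r'))" using Cons.prems(4) h2(1) by simp
      have "(a, a') \<in> R" using first_label_min[OF c1 i1 a'(1) a'y na'x] unfolding a_def .
      moreover have "(a', a) \<in> R" using first_label_min[OF c2 i2 a(1) ay nax] unfolding a'_def .
      ultimately have "a = a'" by (rule Rantisym)
      then have vv: "v = v'" using a(2) a'(2) by simp
      have "increasing LT (min_label R x v # label_word (min_label R) (v # r))" using i1 by simp
      then have it1: "increasing LT (label_word (min_label R) (v # r))" by (rule increasing_ConsD)
      have "increasing LT (min_label R x v' # label_word (min_label R) (v' # r'))" using i2 by simp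
      then have "increasing LT (label_word (min_label R) (v' # r'))" by (rule increasing_ConsD)
      then have it2: "increasing LT (label_word (min_label R) (v # r'))" using vv by simp
      have "t = v # r" using h1(1) by simp
      have "v # r = v # r'" using Cons.IH[of v "v # r'"] \<open>t = v # r\<close> h1(3) it1 h2(3) it2 vv by simp
      then show ?thesis using h1(1) h2(1) vv by simp
    qed
  qed
qed

lemma words_distinct:
  "sat_chain x y c1 \<Longrightarrow> sat_chain x y c2 \<Longrightarrow>
   label_word (min_label R) c1 = label_word (min_label R) c2 \<Longrightarrow> c1 = c2"
proof (induction c1 arbitrary: x c2)
  case Nil then show ?case by simp
next
  case (Cons u t)
  from sat_chain_cases[OF Cons.prems(1)] show ?case
  proof
    assume h1: "u # t = [x] \<and> x = y"
    then have lw1: "label_word (min_label R) (u # t) = []" by simp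
    from sat_chain_cases[OF Cons.prems(2)] show ?thesis
    proof
      assume "c2 = [x] \<and> x = y" then show ?thesis using h1 by simp
    next
      assume "\<exists>v r. c2 = x # v # r \<and> cover x v \<and> sat_chain v y (v # r)"
      then obtain v r where "c2 = x # v # r" by blast
      then have "label_word (min_label R) c2 \<noteq> []" by simp
      then show ?thesis using lw1 Cons.prems(3) by simp
    qed
  next
    assume "\<exists>v r. u # t = x # v # r \<and> cover x v \<and> sat_chain v y (v # r)"
    then obtain v r where h1: "u # t = x # v # r" "cover x v" "sat_chain v y (v # r)" by blast
    have lw1: "label_word (min_label R) (u # t) = min_label R x v # label_word (min_label R) (v # r)"
      using h1(1) by simp
    from sat_chain_cases[OF Cons.prems(2)] show ?thesis
    proof
      assume "c2 = [x] \<and> x = y"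
      then have "label_word (min_label R) c2 = []" by simp
      then show ?thesis using lw1 Cons.prems(3) by simp
    next
      assume "\<exists>v r. c2 = x # v # r \<and> cover x v \<and> sat_chain v y (v # r)"
      then obtain v' r' where h2: "c2 = x # v' # r'" "cover x v'" "sat_chain v' y (v' # r')" by blast
      have lw2: "label_word (min_label R) c2 = min_label R x v' # label_word (min_label R) (v' # r')"
        using h2(1) by simp
      have eqw: "min_label R x v # label_word (min_label R) (v # r) = min_label R x v' # label_word (min_label R) (v' # r')"
        using Cons.prems(3) lw1 lw2 by simp
      have w: "min_label R x v = min_label R x v'" using eqw by (rule list.inject[THEN iffD1, THEN conjunct1])
      have w2: "label_word (min_label R) (v # r) = label_word (min_label R) (v' # r')"
        using eqw by (rule list.inject[THEN iffD1, THEN conjunct2])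
      have "v = sup x (min_label R x v)" using lab_props(2)[OF h1(2)] by (rule sym)
      also have "\<dots> = sup x (min_label R x v')" using w by (rule arg_cong)
      also have "\<dots> = v'" using lab_props(2)[OF h2(2)] .
      finally have vv: "v = v'" .
      have tt: "t = v # r" using h1(1) by simp
      have s2: "sat_chain v y (v' # r')" using h2(3) vv by simp
      have "t = v' # r'" using Cons.IH[of v "v' # r'"] tt h1(3) s2 w2 by simp
      then show ?thesis using h1(1) h2(1) by simp
    qed
  qed
qed

end

theorem proposition5p3:
  fixes R :: "('a::geometric_lattice \<times> 'a) set"
  assumes "linear_order_on {a. atom a} R"
  shows "EW_labeling (\<lambda>a b. (a, b) \<in> R \<and> a \<noteq> b) (min_label R)"
  unfolding EW_labeling_def
proof (intro conjI)
  show "ER_labeling (\<lambda>a b. (a, b) \<in> R \<and> a \<noteq> b) (min_label R)"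
    unfolding ER_labeling_def
  proof (intro allI impI)
    fix x y :: 'a assume "x \<le> y"
    then obtain c where c: "sat_chain x y c" "increasing (\<lambda>a b. (a, b) \<in> R \<and> a \<noteq> b) (label_word (min_label R) c)"
      using greedy_exists[OF assms] by blast
    show "\<exists>!c. sat_chain x y c \<and> increasing (\<lambda>a b. (a, b) \<in> R \<and> a \<noteq> b) (label_word (min_label R) c)"
      using c chain_unique[OF assms] by blast
  qed
  show "rank_two_switching (\<lambda>a b. (a, b) \<in> R \<and> a \<noteq> b) (min_label R)"
    unfolding rank_two_switching_def
  proof (intro allI impI)
    fix c and y :: 'a and i :: nat
    assume ch: "sat_chain bot y c" and i0: "0 < i" and il: "i + 1 < length c"
      and lt: "(min_label R (c ! (i - 1)) (c ! i), min_label R (c ! i) (c ! (i + 1))) \<in> R \<and>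
           min_label R (c ! (i - 1)) (c ! i) \<noteq> min_label R (c ! i) (c ! (i + 1))"
    have cv: "\<And>j. j + 1 < length c \<Longrightarrow> cover (c ! j) (c ! (j + 1))" using ch unfolding sat_chain_def by blast
    have e: "i - 1 + 1 = i" using i0 by simp
    have c1: "cover (c ! (i - 1)) (c ! i)" using cv[of "i - 1"] il e by simp
    have c2: "cover (c ! i) (c ! (i + 1))" using cv[of i] il by simp
    show "\<exists>!x'. cover (c ! (i - 1)) x' \<and> cover x' (c ! (i + 1)) \<and>
             min_label R (c ! (i - 1)) x' = min_label R (c ! i) (c ! (i + 1)) \<and>
             min_label R x' (c ! (i + 1)) = min_label R (c ! (i - 1)) (c ! i)"
      using switch[OF assms c1 c2] lt by blast
  qed
  show "distinct_words (min_label R)"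
    unfolding distinct_words_def using words_distinct[OF assms] by blast
qed

end
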